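(* Let $i$ be an integer. Let $\Phi(z)=\sum_{n\ge0}c_nz^n$, where $c_n$ is the number of unbounded Deutsch paths of $n$ steps from $(0,0)$ to $(n,i)$; there is no restriction on the levels visited. Let $v=v(z)$ be the power series with $v(0)=0$ satisfying $z=\frac{v}{1+v+v^2}$. Then $$\Phi(z)=\frac{(1+v)^{-i-2}\,v\,(1+v+v^2)}{1-v}\quad\text{for } i<0,$$ $$\Phi(z)=\frac{v^{i}(1+v+v^2)}{(1-v)(1+v)^{i+2}}\quad\text{for } i\ge0.$$
   Context: A Deutsch path is a lattice path whose steps are up-steps $(1,1)$ and down-steps $(1,-k)$ for any integer $k\ge1$. The series $v$ is given explicitly by $v=\frac{1-z-\sqrt{1-2z-3z^2}}{2z}$. *)

theory Defs
  imports "HOL-Computational_Algebra.Formal_Power_Series"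
begin

definition deutsch_steps :: "int set" where
  "deutsch_steps = {1} \<union> {d. d \<le> -1}"

text \<open>Unbounded Deutsch paths with n steps from (0,0) to (n,i), encoded by the
  list of their height increments (the x-coordinate advances by 1 at each step).\<close>
definition unbounded_deutsch_paths :: "nat \<Rightarrow> int \<Rightarrow> int list set" where
  "unbounded_deutsch_paths n i =
     {xs. length xs = n \<and> set xs \<subseteq> deutsch_steps \<and> sum_list xs = i}"

definition deutsch_count :: "nat \<Rightarrow> int \<Rightarrow> nat" where
  "deutsch_count n i = card (unbounded_deutsch_paths n i)"

definition Phi :: "int \<Rightarrow> real fps" where
  "Phi i = Abs_fps (\<lambda>n. real (deutsch_count n i))"

end

theory Submission
  imports Defs
begin

abbreviation "PP \<equiv> unbounded_deutsch_paths"

lemma sum_le_len: "set xs \<subseteq> deutsch_steps \<Longrightarrow> sum_list xs \<le> int (length xs)"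
  by (induction xs) (auto simp: deutsch_steps_def)

lemma PP_le: "xs \<in> PP n j \<Longrightarrow> j \<le> int n"
  unfolding unbounded_deutsch_paths_def using sum_le_len by fastforce

lemma PP0: "PP 0 i = (if i = 0 then {[]} else {})"
  by (auto simp: unbounded_deutsch_paths_def)

lemma decomp:
  assumes "int K + i \<ge> int n"
  shows "PP (Suc n) i = Cons 1 ` PP n (i-1) \<union> (\<Union>k\<in>{1..K}. Cons (- int k) ` PP n (i + int k))"
proof (rule set_eqI, rule iffI)
  fix ys assume ys: "ys \<in> PP (Suc n) i"
  then obtain x xs where e: "ys = x # xs" and l: "length xs = n" and x: "x \<in> deutsch_steps"
     and xs: "set xs \<subseteq> deutsch_steps" and s: "x + sum_list xs = i"
    unfolding unbounded_deutsch_paths_def by (cases ys) auto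
  show "ys \<in> Cons 1 ` PP n (i-1) \<union> (\<Union>k\<in>{1..K}. Cons (- int k) ` PP n (i + int k))"
  proof (cases "x = 1")
    case True
    then have "xs \<in> PP n (i-1)" using l xs s unfolding unbounded_deutsch_paths_def by auto
    then show ?thesis using e True by auto
  next
    case False
    then have xn: "x \<le> -1" using x by (auto simp: deutsch_steps_def)
    define k where "k = nat (-x)"
    have xk: "x = - int k" using xn k_def by auto
    have m: "xs \<in> PP n (i + int k)" using l xs s xk unfolding unbounded_deutsch_paths_def by auto
    have "i + int k \<le> int n" using PP_le[OF m] .
    then have "k \<in> {1..K}" using assms xn xk by auto
    then show ?thesis using e xk m by blast
  qed
next
  fix ys assume "ys \<in> Cons 1 ` PP n (i-1) \<union> (\<Union>k\<in>{1..K}. Cons (- int k) ` PP n (i + int k))"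
  then show "ys \<in> PP (Suc n) i"
    unfolding unbounded_deutsch_paths_def by (auto simp: deutsch_steps_def)
qed

lemma PP_finite: "finite (PP n i)"
proof (induction n arbitrary: i)
  case 0 then show ?case by (simp add: PP0)
next
  case (Suc n)
  show ?case by (subst decomp[where K="nat (int n - i)" and i=i and n=n]) (auto simp: Suc)
qed

lemma count_rec:
  assumes "int K + i \<ge> int n"
  shows "deutsch_count (Suc n) i = deutsch_count n (i-1) + (\<Sum>k=1..K. deutsch_count n (i + int k))"
proof -
  have d1: "Cons 1 ` PP n (i-1) \<inter> (\<Union>k\<in>{1..K}. Cons (- int k) ` PP n (i + int k)) = {}" by auto
  have c2: "card (\<Union>k\<in>{1..K}. Cons (- int k) ` PP n (i + int k)) = (\<Sum>k=1..K. card (Cons (- int k) ` PP n (i + int k)))"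
    by (rule card_UN_disjoint) (auto simp: PP_finite)
  show ?thesis
    unfolding deutsch_count_def
    apply (subst decomp[OF assms])
    apply (subst card_Un_disjoint)
    using d1 c2 by (auto simp: PP_finite card_image)
qed

lemma count0: "deutsch_count 0 i = (if i = 0 then 1 else 0)"
  by (simp add: deutsch_count_def PP0)

unbundle fps_syntax

lemma pow_vanish:
  fixes w c :: "real fps"
  assumes "w $ 0 = 0"
  shows "n < m \<Longrightarrow> (c * w ^ m) $ n = 0"
proof (induction m arbitrary: n)
  case 0 then show ?case by simp
next
  case (Suc m)
  have "(c * w ^ Suc m) $ n = ((c * w ^ m) * w) $ n" by (simp only: power_Suc2 mult.assoc)
  also have "\<dots> = (\<Sum>k=0..n. (c * w ^ m) $ k * w $ (n - k))" by (rule fps_mult_nth)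
  also have "\<dots> = 0"
  proof (rule sum.neutral, rule ballI)
    fix k assume k: "k \<in> {0..n}"
    show "(c * w ^ m) $ k * w $ (n - k) = 0"
    proof (cases "k < m")
      case True then show ?thesis using Suc.IH by simp
    next
      case False then have "n - k = 0" using k Suc.prems by auto
      then show ?thesis using assms by simp
    qed
  qed
  finally show ?case .
qed

locale dctx =
  fixes v :: "real fps"
  assumes v0: "v $ 0 = 0"
    and vz: "fps_X = v / (1 + v + v^2)"
begin

definition "s = 1 + v + v^2"
definition "p = 1 + v"
definition "q = 1 - v"
definition "S = inverse s"
definition "P = inverse p"
definition "Q = inverse q"
definition "A = s * Q * P^2"
definition "w = v * P"

lemma s0: "s $ 0 = 1" by (simp add: s_def v0 power2_eq_square)
lemma p0: "p $ 0 = 1" by (simp add: p_def v0)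
lemma q0: "q $ 0 = 1" by (simp add: q_def v0)
lemma Ss: "S * s = 1" unfolding S_def by (rule inverse_mult_eq_1) (simp add: s0)
lemma Pp: "P * p = 1" unfolding P_def by (rule inverse_mult_eq_1) (simp add: p0)
lemma Qq: "Q * q = 1" unfolding Q_def by (rule inverse_mult_eq_1) (simp add: q0)
lemma XS: "fps_X = v * S"
  using vz unfolding S_def s_def[symmetric] by (simp add: fps_divide_unit s0)
lemma Xs: "fps_X * s = v" using XS Ss by (metis mult.assoc mult.right_neutral)
lemma w0: "w $ 0 = 0" by (simp add: w_def v0)
lemma A0: "A $ 0 = 1"
proof -
  have "P $ 0 = 1" using Pp p0 by (metis fps_mult_nth_0 fps_one_nth mult.right_neutral)
  moreover have "Q $ 0 = 1" using Qq q0 by (metis fps_mult_nth_0 fps_one_nth mult.right_neutral)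
  ultimately show ?thesis by (simp add: A_def s0 power2_eq_square)
qed

definition H :: "int \<Rightarrow> real fps" where
  "H j = (if j < 0 then v * p ^ nat (-j) * A else w ^ nat j * A)"
definition G :: "int \<Rightarrow> real fps" where
  "G j = (if j < 0 then A * p ^ nat (-j) else A * p * w ^ nat (j+1))"

lemma pw: "p * w = v" unfolding w_def using Pp by (metis mult.commute mult.left_commute mult.right_neutral)

lemma HG: "H j = G (j - 1) - G j"
proof (cases "j < 0")
  case True
  then have e: "nat (-(j-1)) = Suc (nat (-j))" by auto
  show ?thesis using True unfolding H_def G_def e by (simp add: p_def algebra_simps)
next
  case False
  then have e: "nat (j+1) = Suc (nat j)" by auto
  show ?thesis
  proof (cases "j = 0")
    case True
    have "A * p - A * p * w = A * p - A * (p * w)" by (simp add: algebra_simps)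
    also have "\<dots> = A" using pw by (simp add: p_def algebra_simps)
    finally show ?thesis unfolding H_def G_def using True by simp
  next
    case False
    then have e2: "nat (j - 1 + 1) = nat j" by auto
    have "A * p * w ^ nat j * w = A * w ^ nat j * (p * w)" by (simp add: algebra_simps)
    also have "\<dots> = A * w ^ nat j * v" using pw by simp
    finally have "A * w ^ nat j = A * p * w ^ nat j - A * p * w ^ nat j * w"
      by (simp add: p_def algebra_simps)
    then show ?thesis using \<open>\<not> j < 0\<close> False unfolding H_def G_def e e2
      by (simp add: algebra_simps)
  qed
qed

lemma key1: "fps_X * (1 + p * w^2) = w"
proof -
  have "fps_X * (1 + p * w^2) = fps_X * (1 + v * w)" using pw by (simp add: power2_eq_square mult.assoc)
  also have "1 + v * w = s * P" using Pp unfolding w_def s_def p_def by algebra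
  also have "fps_X * (s * P) = w" using Xs unfolding w_def by (simp add: mult.assoc[symmetric])
  finally show ?thesis .
qed

lemma key0: "A = 1 + fps_X * (v * p * A + A * p * w)"
proof -
  have "A * S * q * p^2 = 1" using Ss Pp Qq unfolding A_def by algebra
  then show ?thesis using Ss XS pw unfolding s_def p_def q_def by algebra
qed

lemma Hrec: "H j = (if j = 0 then 1 else 0) + fps_X * (H (j - 1) + G j)"
proof (cases "j < 0")
  case True
  define m where "m = nat (-j)"
  have e: "nat (-(j-1)) = Suc m" using True m_def by auto
  have a: "v * p ^ Suc m * A + A * p ^ m = (p^m * A) * s"
    by (simp add: p_def s_def algebra_simps power2_eq_square)
  have "fps_X * (v * p ^ Suc m * A + A * p ^ m) = (p^m * A) * (fps_X * s)"
    unfolding a by (simp add: algebra_simps)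
  then have "v * p ^ m * A = fps_X * (v * p ^ Suc m * A + A * p ^ m)"
    using Xs by (simp add: algebra_simps)
  then show ?thesis using True unfolding H_def G_def e m_def[symmetric] by simp
next
  case False
  show ?thesis
  proof (cases "j = 0")
    case True
    then show ?thesis unfolding H_def G_def using key0 by simp
  next
    case False
    define m where "m = nat (j - 1)"
    have e: "nat j = Suc m" "nat (j+1) = Suc (Suc m)" using False \<open>\<not> j < 0\<close> m_def by auto
    have a: "w ^ m * A + A * p * w ^ Suc (Suc m) = (w^m * A) * (1 + p * w^2)"
      by (simp add: algebra_simps power2_eq_square)
    have "fps_X * (w ^ m * A + A * p * w ^ Suc (Suc m)) = (w^m * A) * (fps_X * (1 + p * w^2))"
      unfolding a by (simp add: algebra_simps)
    also have "\<dots> = (w^m * A) * w" by (simp only: key1)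
    also have "\<dots> = w ^ Suc m * A" by (simp add: power_Suc2 algebra_simps)
    finally have "w ^ Suc m * A = fps_X * (w ^ m * A + A * p * w ^ Suc (Suc m))" by simp
    then show ?thesis using False \<open>\<not> j < 0\<close> unfolding H_def G_def e m_def[symmetric] by simp
  qed
qed

lemma tele: "(\<Sum>k=1..K. H (i + int k)) = G i - G (i + int K)"
proof (induction K)
  case 0 then show ?case by simp
next
  case (Suc K)
  have "(\<Sum>k=1..Suc K. H (i + int k)) = (\<Sum>k=1..K. H (i + int k)) + H (i + int (Suc K))"
    by simp
  also have "H (i + int (Suc K)) = G (i + int K) - G (i + int (Suc K))"
    using HG[of "i + int (Suc K)"] by simp
  finally show ?case using Suc by simp
qed

lemma G_vanish: "0 \<le> j \<Longrightarrow> int n \<le> j \<Longrightarrow> G j $ n = 0"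
  unfolding G_def using pow_vanish[OF w0] by simp

lemma H0: "H j $ 0 = (if j = 0 then 1 else 0)"
  unfolding H_def by (auto simp: v0 w0 A0)

lemma Hstep:
  assumes "int K + i \<ge> int n"
  shows "H i $ Suc n = H (i - 1) $ n + (\<Sum>k=1..K. H (i + int k) $ n)"
proof -
  have "H i $ Suc n = (H (i - 1) + G i) $ n"
    by (subst Hrec) simp
  also have "G i = (\<Sum>k=1..K. H (i + int k)) + G (i + int K)" using tele by simp
  finally have e: "H i $ Suc n = H (i - 1) $ n + (\<Sum>k=1..K. H (i + int k)) $ n + G (i + int K) $ n"
    by simp
  have "G (i + int K) $ n = 0" using assms by (intro G_vanish) auto
  with e show ?thesis by (simp add: fps_sum_nth)
qed

lemma Phi_H: "Phi i = H i"
proof -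
  have "\<forall>i. real (deutsch_count n i) = H i $ n" for n
  proof (induction n)
    case 0 then show ?case by (simp add: count0 H0)
  next
    case (Suc n)
    show ?case
    proof
      fix i
      define K where "K = nat (int n - i)"
      have K: "int K + i \<ge> int n" unfolding K_def by simp
      show "real (deutsch_count (Suc n) i) = H i $ Suc n"
        using Suc.IH by (simp add: count_rec[OF K] Hstep[OF K])
    qed
  qed
  then show ?thesis unfolding Phi_def by (simp add: fps_eq_iff)
qed

lemma final:
  "(i < 0 \<longrightarrow>
            Phi i = (1 + v) ^ nat (- i - 1) * v * (1 + v + v^2) / ((1 + v) * (1 - v)))
       \<and> (0 \<le> i \<longrightarrow>
            Phi i = v ^ nat i * (1 + v + v^2) / ((1 - v) * (1 + v) ^ nat (i + 2)))"
proof (intro conjI impI)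
  assume i: "i < 0"
  define m where "m = nat (-i-1)"
  have e: "nat (-i) = Suc m" using i m_def by auto
  have d: "(1 + v) * (1 - v) = p * q" by (simp add: p_def q_def)
  have "(p*q) $ 0 \<noteq> 0" by (simp add: p0 q0)
  then have "p ^ m * v * s / (p * q) = p ^ m * v * s * (P * Q)"
    by (simp add: fps_divide_unit fps_inverse_mult P_def Q_def)
  also have "\<dots> = v * p ^ Suc m * (s * Q * P^2)"
  proof -
    have "v * p ^ Suc m * (s * Q * P^2) = p ^ m * v * s * Q * P * (P * p)"
      by (simp add: algebra_simps power2_eq_square)
    also have "\<dots> = p ^ m * v * s * (P * Q)" by (simp add: Pp ac_simps)
    finally show ?thesis by (rule sym)
  qed
  finally have r: "p ^ m * v * s / (p * q) = H i"
    unfolding H_def A_def using i by (simp add: e)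
  have "(1 + v) ^ nat (- i - 1) * v * (1 + v + v^2) / ((1 + v) * (1 - v)) = p ^ m * v * s / (p * q)"
    by (simp add: m_def p_def q_def s_def)
  then show "Phi i = (1 + v) ^ nat (- i - 1) * v * (1 + v + v^2) / ((1 + v) * (1 - v))"
    using r Phi_H by simp
next
  assume i: "0 \<le> i"
  define m where "m = nat i"
  have e: "nat (i + 2) = m + 2" using i m_def by auto
  have d: "(1 - v) * (1 + v) ^ (m+2) = q * p ^ (m+2)" by (simp add: p_def q_def)
  have "(q * p ^ (m+2)) $ 0 \<noteq> 0" by (simp add: p0 q0 fps_nth_power_0)
  then have "v ^ m * s / (q * p ^ (m+2)) = v ^ m * s * (Q * P ^ (m+2))"
    by (simp add: fps_divide_unit fps_inverse_mult P_def Q_def fps_inverse_power)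
  also have "\<dots> = (v * P) ^ m * (s * Q * P^2)"
    by (simp add: power_mult_distrib power_add power2_eq_square algebra_simps)
  finally have r: "v ^ m * s / (q * p ^ (m+2)) = H i"
    unfolding H_def A_def w_def using i by (simp add: m_def)
  have "v ^ nat i * (1 + v + v^2) / ((1 - v) * (1 + v) ^ nat (i + 2)) = v ^ m * s / (q * p ^ (m+2))"
    by (simp add: e m_def p_def q_def s_def)
  then show "Phi i = v ^ nat i * (1 + v + v^2) / ((1 - v) * (1 + v) ^ nat (i + 2))"
    using r Phi_H by simp
qed

end

theorem theorem8:
  fixes v :: "real fps" and i :: int
  assumes v0: "fps_nth v 0 = 0"
    and vz: "fps_X = v / (1 + v + v^2)"
  shows "(i < 0 \<longrightarrow>
            Phi i = (1 + v) ^ nat (- i - 1) * v * (1 + v + v^2) / ((1 + v) * (1 - v)))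
       \<and> (0 \<le> i \<longrightarrow>
            Phi i = v ^ nat i * (1 + v + v^2) / ((1 - v) * (1 + v) ^ nat (i + 2)))"
  using dctx.final[OF dctx.intro[OF v0 vz]] .

end
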